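(* (1) Let $(Y^*,Y,X)$ be random variables with $Y^*,Y\in\{0,1\}$, $X=(\tilde X,Z)\in\mathcal X$, $\tilde X\in\tilde{\mathcal X}$, $Z$ taking values in a finite set $\mathcal Z$. Let $p(x)=\Pr(Y=1\mid X=x)$, $p^*(x)=\Pr(Y^*=1\mid X=x)$, $\underline p_z(\tilde x)=\inf_{z\in\mathcal Z}p(\tilde x,z)$, $\bar p_z(\tilde x)=\sup_{z\in\mathcal Z}p(\tilde x,z)$. Assume: for all $x=(\tilde x,z)$ and $y\in\{0,1\}$, $\Pr(Y=1-y\mid Y^*=y,X=x)=\Pr(Y=1-y\mid Y^*=y,\tilde X=\tilde x)$; for all $\tilde x$, $\Pr(Y=0\mid Y^*=1,\tilde x)+\Pr(Y=1\mid Y^*=0,\tilde x)\le1$; for all $\tilde x$, $\bar p_z(\tilde x)>0$ and $\underline p_z(\tilde x)<1$; and for all $\tilde x$, $\Pr(Y=1\mid Y^*=0,\tilde x)\le\Pr(Y=0\mid Y^*=1,\tilde x)$. Then for every $x=(\tilde x,z)\in\mathcal X$, $$p^*(x)\in\left[\frac{p(x)-\min\{\underline p_z(\tilde x),1-\bar p_z(\tilde x)\}}{1-\min\{\underline p_z(\tilde x),1-\bar p_z(\tilde x)\}},\ \frac{p(x)}{\bar p_z(\tilde x)}\right].$$ (2) Let $(Y^*,Y,X,W)$ be random variables with $Y^*,Y\in\{0,1\}$, $X\in\mathcal X$, $W$ taking values in a finite set of reals $\mathcal W$. Let $p^*(x)=\Pr(Y^*=1\mid X=x)$, $p_W(x,w)=\Pr(Y=1\mid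 X=x,W=w)$, $\underline p_w(x,w)=\inf_{\tilde w\le w}p_W(x,\tilde w)$, $\bar p_w(x,w)=\sup_{\tilde w\le w}p_W(x,\tilde w)$ (over $\tilde w\in\mathcal W$). Assume: $\Pr(Y^*=1\mid x,w)=p^*(x)$ for all $x,w$; for all $x$, $y\in\{0,1\}$ and $w_1>w_2$ in $\mathcal W$, $\Pr(Y=1-y\mid Y^*=y,x,w_1)\le\Pr(Y=1-y\mid Y^*=y,x,w_2)$; for all $x,w$, $\Pr(Y=1\mid Y^*=0,x,w)+\Pr(Y=0\mid Y^*=1,x,w)\le1$ and $0<p_W(x,w)<1$; and for all $(x,w)$, $\Pr(Y=1\mid Y^*=0,x,w)\le\Pr(Y=0\mid Y^*=1,x,w)$. Then for every $x\in\mathcal X$, $$p^*(x)\in\left[\sup_{w\in\mathcal W}\left\{\frac{p_W(x,w)-\min\{\underline p_w(x,w),1-\bar p_w(x,w)\}}{1-\min\{\underline p_w(x,w),1-\bar p_w(x,w)\}}\right\},\ \inf_{w\in\mathcal W}\left\{\frac{p_W(x,w)}{\bar p_w(x,w)}\right\}\right].$$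
   Context: $Y^*$ is the true (unobserved) binary outcome and $Y$ the observed, possibly misreported outcome; conditioning on $\tilde x$ (resp. $x,w$) means conditioning on $\tilde X=\tilde x$ (resp. $X=x,W=w$). *)

theory Defs
  imports "HOL-Probability.Probability"
begin

text \<open>Conditional laws of the pair (Y*, Y) are modelled as pmfs on bool \<times> bool:
  the first component is the true outcome Y*, the second the observed outcome Y
  (True = 1, False = 0).\<close>

definition cprob :: "'a pmf \<Rightarrow> 'a set \<Rightarrow> 'a set \<Rightarrow> real" where
  "cprob P A B = measure_pmf.prob P (A \<inter> B) / measure_pmf.prob P B"

definition misrep :: "(bool \<times> bool) pmf \<Rightarrow> bool \<Rightarrow> real" where
  "misrep P y = cprob P {v. snd v = (\<not> y)} {v. fst v = y}"

definition probY :: "(bool \<times> bool) pmf \<Rightarrow> real" where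
  "probY P = measure_pmf.prob P {v. snd v}"

definition probYstar :: "(bool \<times> bool) pmf \<Rightarrow> real" where
  "probYstar P = measure_pmf.prob P {v. fst v}"

end

theory Submission
  imports Defs
begin


lemma prob_UNIV_bb: "measure_pmf.prob (P::(bool\<times>bool) pmf) A = (\<Sum>v\<in>A. pmf P v)"
  by (rule measure_measure_pmf_finite) simp

lemma sum4: "pmf (P::(bool\<times>bool) pmf) (True,True) + pmf P (True,False) + pmf P (False,True) + pmf P (False,False) = 1"
proof -
  have "(\<Sum>v\<in>UNIV. pmf P v) = 1" by (rule sum_pmf_eq_1) auto
  moreover have "(UNIV::(bool\<times>bool) set) = {(True,True),(True,False),(False,True),(False,False)}" by auto
  ultimately have "sum (pmf P) {(True,True),(True,False),(False,True),(False,False)} = 1" by metis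
  then show ?thesis by (simp add: add.assoc)
qed

lemma key:
  fixes P :: "(bool\<times>bool) pmf"
  shows "probY P = misrep P False * (1 - probYstar P) + (1 - misrep P True) * probYstar P"
    and "0 \<le> misrep P False" and "0 \<le> misrep P True"
    and "0 \<le> probYstar P" and "probYstar P \<le> 1"
proof -
  define a where "a = pmf P (True,True)"
  define b where "b = pmf P (True,False)"
  define c where "c = pmf P (False,True)"
  define d where "d = pmf P (False,False)"
  have s: "a+b+c+d = 1" using sum4[of P] unfolding a_def b_def c_def d_def .
  have nn: "a \<ge> 0" "b \<ge> 0" "c \<ge> 0" "d \<ge> 0" unfolding a_def b_def c_def d_def by auto
  have e1: "{v. snd v} = {(True,True),(False,True)}" by auto
  have e2: "{v. fst v} = {(True,True),(True,False)}" by auto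
  have e3: "{v::bool\<times>bool. snd v = (\<not> False)} \<inter> {v. fst v = False} = {(False,True)}" by auto
  have e4: "{v::bool\<times>bool. fst v = False} = {(False,True),(False,False)}" by auto
  have e5: "{v::bool\<times>bool. snd v = (\<not> True)} \<inter> {v. fst v = True} = {(True,False)}" by auto
  have e6: "{v::bool\<times>bool. fst v = True} = {(True,True),(True,False)}" by auto
  have pY: "probY P = a + c" unfolding probY_def e1 prob_UNIV_bb a_def c_def by simp
  have pS: "probYstar P = a + b" unfolding probYstar_def e2 prob_UNIV_bb a_def b_def by simp
  have m0: "misrep P False = c/(c+d)" unfolding misrep_def cprob_def e3 e4 prob_UNIV_bb c_def d_def by simp
  have m1: "misrep P True = b/(a+b)" unfolding misrep_def cprob_def e5 e6 prob_UNIV_bb a_def b_def by simp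
  show "0 \<le> misrep P False" "0 \<le> misrep P True" "0 \<le> probYstar P" "probYstar P \<le> 1"
    using nn s by (auto simp: m0 m1 pS)
  have A: "c/(c+d) * (c+d) = c" using nn by (cases "c+d = 0") auto
  have B: "(1 - b/(a+b)) * (a+b) = a" using nn
    by (cases "a+b = 0") (auto simp: field_simps)
  have "1 - (a+b) = c + d" using s by simp
  then show "probY P = misrep P False * (1 - probYstar P) + (1 - misrep P True) * probYstar P"
    unfolding pY pS m0 m1 using A B by simp
qed

lemma lower_core:
  fixes a0 a1 s f m :: real
  assumes "0 \<le> a0" "0 \<le> a1" "0 \<le> s" "s \<le> 1" "f = a0 * (1-s) + (1-a1) * s" "a0 \<le> m" "m<1"
  shows "(f-m)/(1-m) \<le> s"
proof -
  have "(m-a0) * (1-s) \<ge> 0" using assms by simp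
  moreover have "a1 * s \<ge> 0" using assms by simp
  ultimately have "f - m \<le> s * (1-m)" using assms(5) by (simp add: algebra_simps)
  then show ?thesis using assms by (simp add: divide_le_eq mult.commute)
qed

lemma upper_core:
  fixes s f S :: real
  assumes "S>0" "s*S \<le> f"
  shows "s \<le> f/S"
  using assms by (simp add: le_divide_eq)

lemma part1:
  fixes K :: "'a \<times> 'z::finite \<Rightarrow> (bool \<times> bool) pmf" and A0 A1 :: real
  assumes m0: "\<And>z. misrep (K (xt, z)) False = A0"
    and m1: "\<And>z. misrep (K (xt, z)) True = A1"
    and sum1: "A1 + A0 \<le> 1"
    and pos: "(SUP z'. probY (K (xt, z'))) > 0" "(INF z'. probY (K (xt, z'))) < 1"
    and le: "A0 \<le> A1"
  shows "probYstar (K (xt, z)) \<in>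
           {(probY (K (xt, z)) - min (INF z'. probY (K (xt, z'))) (1 - (SUP z'. probY (K (xt, z')))))
              / (1 - min (INF z'. probY (K (xt, z'))) (1 - (SUP z'. probY (K (xt, z'))))) ..
            probY (K (xt, z)) / (SUP z'. probY (K (xt, z')))}"
proof -
  define f where "f = (\<lambda>z. probY (K (xt, z)))"
  define s where "s = (\<lambda>z. probYstar (K (xt, z)))"
  have fe: "\<And>z. f z = A0 * (1-s z) + (1-A1) * s z" unfolding f_def s_def using key(1) m0 m1 by metis
  have nn: "0 \<le>A0" "0 \<le>A1" using key(2,3) m0 m1 by metis+
  have sb: "\<And>z. 0 \<le> s z" "\<And>z. s z \<le> 1" unfolding s_def using key(4,5) by auto
  have flo: "A0 \<le> f z" for z
  proof -
    have "A0 * (1-s z) + A0 * s z \<le> A0 * (1-s z) + (1-A1) * s z"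
      using sb[of z] sum1 by (intro add_left_mono mult_right_mono) auto
    then show ?thesis using fe[of z] by (simp add: algebra_simps)
  qed
  have fhi: "f z \<le> 1 - A1" for z
  proof -
    have "A0 * (1-s z) + (1-A1) * s z \<le> (1-A1) * (1-s z) + (1-A1) * s z"
      using sb[of z] sum1 by (intro add_right_mono mult_right_mono) auto
    then show ?thesis using fe[of z] by (simp add: algebra_simps)
  qed
  define I where "I = (INF z'. f z')"
  define S where "S = (SUP z'. f z')"
  have IA: "A0 \<le> I" unfolding I_def by (rule cINF_greatest) (auto intro: flo)
  have SA: "S \<le> 1 - A1" unfolding S_def by (rule cSUP_least) (auto intro: fhi)
  have fS: "f z \<le> S" unfolding S_def by (rule cSUP_upper) auto
  have If: "I \<le> f z" unfolding I_def by (rule cINF_lower) auto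
  have Sp: "S > 0" "I < 1" using pos unfolding S_def I_def f_def by auto
  have up: "s z \<le> f z / S"
  proof (rule upper_core[OF Sp(1)])
    have "s z * S \<le> s z * (1 - A1)" using SA sb[of z] by (simp add: mult_left_mono)
    also have "\<dots> \<le> f z" using fe[of z] nn sb[of z] by simp
    finally show "s z * S \<le> f z" .
  qed
  have lo: "(f z - min I (1-S))/(1 - min I (1-S)) \<le> s z"
    by (rule lower_core[OF nn sb(1) sb(2) fe]) (use IA SA le Sp in auto)
  show ?thesis using up lo unfolding f_def s_def I_def S_def by simp
qed

lemma part2:
  fixes K2 :: "real \<Rightarrow> (bool \<times> bool) pmf" and q :: real and Ws :: "real set"
  assumes fin: "finite Ws" and ne: "Ws \<noteq> {}"
    and sq: "\<And>w. w\<in>Ws \<Longrightarrow> probYstar (K2 w) = q"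
    and mono: "\<And>y w1 w2. w1\<in>Ws \<Longrightarrow> w2\<in>Ws \<Longrightarrow> w1 > w2 \<Longrightarrow> misrep (K2 w1) y \<le> misrep (K2 w2) y"
    and c1: "\<And>w. w\<in>Ws \<Longrightarrow> misrep (K2 w) False + misrep (K2 w) True \<le> 1
                    \<and> 0 < probY (K2 w) \<and> probY (K2 w) < 1"
    and c2: "\<And>w. w\<in>Ws \<Longrightarrow> misrep (K2 w) False \<le> misrep (K2 w) True"
  shows "q \<in>
           {(SUP w\<in>Ws.
               (probY (K2 w) - min (INF w'\<in>{w'\<in>Ws. w' \<le> w}. probY (K2 w'))
                                     (1 - (SUP w'\<in>{w'\<in>Ws. w' \<le> w}. probY (K2 w'))))
               / (1 - min (INF w'\<in>{w'\<in>Ws. w' \<le> w}. probY (K2 w'))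
                          (1 - (SUP w'\<in>{w'\<in>Ws. w' \<le> w}. probY (K2 w'))))) ..
            (INF w\<in>Ws. probY (K2 w) / (SUP w'\<in>{w'\<in>Ws. w' \<le> w}. probY (K2 w')))}"
proof -
  define f where "f = (\<lambda>w. probY (K2 w))"
  define a0 where "a0 = (\<lambda>w. misrep (K2 w) False)"
  define a1 where "a1 = (\<lambda>w. misrep (K2 w) True)"
  have fe: "\<And>w. w\<in>Ws \<Longrightarrow> f w = a0 w * (1-q) + (1-a1 w) * q"
    unfolding f_def a0_def a1_def using key(1) sq by metis
  have nn: "\<And>w. 0 \<le> a0 w" "\<And>w. 0 \<le> a1 w" unfolding a0_def a1_def using key(2,3) by auto
  have qb: "0 \<le> q" "q \<le> 1" using key(4,5) sq ne by blast+
  have mo0: "a0 w \<le> a0 w'" if "w\<in>Ws" "w'\<in>Ws" "w' \<le> w" for w w'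
    using mono[OF that(1,2)] that(3) unfolding a0_def by (cases "w' = w") auto
  have mo1: "a1 w \<le> a1 w'" if "w\<in>Ws" "w'\<in>Ws" "w' \<le> w" for w w'
    using mono[OF that(1,2)] that(3) unfolding a1_def by (cases "w' = w") auto
  have s1: "\<And>w. w\<in>Ws \<Longrightarrow> a0 w + a1 w \<le> 1" "\<And>w. w\<in>Ws \<Longrightarrow> 0 < f w" "\<And>w. w\<in>Ws \<Longrightarrow> f w < 1"
    using c1 unfolding a0_def a1_def f_def by auto
  have le: "\<And>w. w\<in>Ws \<Longrightarrow> a0 w \<le> a1 w" using c2 unfolding a0_def a1_def by auto
  have flo: "a0 w \<le> f w" if "w\<in>Ws" for w
  proof -
    have "a0 w * (1-q) + a0 w * q \<le> a0 w * (1-q) + (1-a1 w) * q"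
      using qb s1(1)[OF that] by (intro add_left_mono mult_right_mono) auto
    then show ?thesis using fe[OF that] by (simp add: algebra_simps)
  qed
  have fhi: "f w \<le> 1 - a1 w" if "w\<in>Ws" for w
  proof -
    have "a0 w * (1-q) + (1-a1 w) * q \<le> (1-a1 w) * (1-q) + (1-a1 w) * q"
      using qb s1(1)[OF that] by (intro add_right_mono mult_right_mono) auto
    then show ?thesis using fe[OF that] by (simp add: algebra_simps)
  qed
  define L where "L = (\<lambda>w. {w'\<in>Ws. w' \<le> w})"
  define I where "I = (\<lambda>w. INF w'\<in>L w. f w')"
  define S where "S = (\<lambda>w. SUP w'\<in>L w. f w')"
  have Lne: "w \<in> L w" if "w\<in>Ws" for w using that unfolding L_def by auto
  have Lfin: "finite (L w)" for w using fin unfolding L_def by auto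
  have fS: "f w \<le> S w" if "w\<in>Ws" for w unfolding S_def
    by (rule cSUP_upper[OF Lne[OF that]]) (use Lfin in auto)
  have If: "I w \<le> f w" if "w\<in>Ws" for w unfolding I_def
    by (rule cINF_lower[OF _ Lne[OF that]]) (use Lfin in auto)
  have IA: "a0 w \<le> I w" if "w\<in>Ws" for w unfolding I_def
  proof (rule cINF_greatest)
    show "L w \<noteq> {}" using Lne[OF that] by auto
    fix w' assume "w' \<in> L w"
    then have "w'\<in>Ws" "w' \<le> w" unfolding L_def by auto
    then show "a0 w \<le> f w'" using mo0[OF that] flo by fastforce
  qed
  have SA: "S w \<le> 1 - a1 w" if "w\<in>Ws" for w unfolding S_def
  proof (rule cSUP_least)
    show "L w \<noteq> {}" using Lne[OF that] by auto
    fix w' assume "w' \<in> L w"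
    then have "w'\<in>Ws" "w' \<le> w" unfolding L_def by auto
    then show "f w' \<le> 1 - a1 w" using mo1[OF that] fhi by fastforce
  qed
  have lo: "(f w - min (I w) (1 - S w))/(1 - min (I w) (1 - S w)) \<le> q" if "w\<in>Ws" for w
    by (rule lower_core[OF nn(1) nn(2) qb fe[OF that]])
       (use IA[OF that] SA[OF that] le[OF that] If[OF that] s1(3)[OF that] in auto)
  have up: "q \<le> f w / S w" if "w\<in>Ws" for w
  proof (rule upper_core)
    show "S w > 0" using fS[OF that] s1(2)[OF that] by simp
    show "q * S w \<le> f w"
    proof (cases "q = 0")
      case True then show ?thesis using s1(2)[OF that] by simp
    next
      case False
      then have qp: "q > 0" using qb by simp
      have "S w \<le> f w / q" unfolding S_def
      proof (rule cSUP_least)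
        show "L w \<noteq> {}" using Lne[OF that] by auto
        fix w' assume "w' \<in> L w"
        then have w': "w'\<in>Ws" "w' \<le> w" unfolding L_def by auto
        have A: "q * (a0 w'*(1-q)) \<le> q * ((1-a1 w') * (1-q))"
          using s1(1)[OF w'(1)] qb by (intro mult_left_mono mult_right_mono) auto
        have B: "q * (1-a1 w') \<le> q * (1-a1 w)" using mo1[OF that w'] qb by (simp add: mult_left_mono)
        have C: "0 \<le> a0 w * (1-q)" using nn qb by simp
        have D: "q * f w' = q * (a0 w' * (1-q)) + q * ((1-a1 w') * q)" unfolding fe[OF w'(1)] by (simp add: algebra_simps)
        have E: "q * ((1-a1 w') * (1-q)) + q * ((1-a1 w') * q) = q * (1-a1 w')" by (simp add: algebra_simps)
        have F: "q * (1-a1 w) = (1-a1 w) * q" by simp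
        have "q * f w' \<le> f w" using A B C D E F fe[OF that] by linarith
        then show "f w' \<le> f w / q" using qp by (simp add: le_divide_eq mult.commute)
      qed
      then show ?thesis using qp by (simp add: le_divide_eq mult.commute)
    qed
  qed
  have "(SUP w\<in>Ws. (f w - min (I w) (1 - S w))/(1 - min (I w) (1 - S w))) \<le> q"
    by (rule cSUP_least[OF ne]) (use lo in auto)
  moreover have "q \<le> (INF w\<in>Ws. f w / S w)"
    by (rule cINF_greatest[OF ne]) (use up in auto)
  ultimately show ?thesis unfolding f_def I_def S_def L_def by simp
qed


theorem proposition5:
  shows
  "(\<forall>(K :: 'a \<times> 'z::finite \<Rightarrow> (bool \<times> bool) pmf) (Zd :: 'a \<Rightarrow> 'z pmf).
      (\<forall>xt z y. misrep (K (xt, z)) y = misrep (bind_pmf (Zd xt) (\<lambda>z'. K (xt, z'))) y) \<and>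
      (\<forall>xt. misrep (bind_pmf (Zd xt) (\<lambda>z'. K (xt, z'))) True
            + misrep (bind_pmf (Zd xt) (\<lambda>z'. K (xt, z'))) False \<le> 1) \<and>
      (\<forall>xt. (SUP z'. probY (K (xt, z'))) > 0 \<and> (INF z'. probY (K (xt, z'))) < 1) \<and>
      (\<forall>xt. misrep (bind_pmf (Zd xt) (\<lambda>z'. K (xt, z'))) False
            \<le> misrep (bind_pmf (Zd xt) (\<lambda>z'. K (xt, z'))) True)
      \<longrightarrow>
      (\<forall>xt z.
         probYstar (K (xt, z)) \<in>
           {(probY (K (xt, z)) - min (INF z'. probY (K (xt, z'))) (1 - (SUP z'. probY (K (xt, z')))))
              / (1 - min (INF z'. probY (K (xt, z'))) (1 - (SUP z'. probY (K (xt, z'))))) ..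
            probY (K (xt, z)) / (SUP z'. probY (K (xt, z')))}))
   \<and>
   (\<forall>(K2 :: 'x \<Rightarrow> real \<Rightarrow> (bool \<times> bool) pmf) (Wd :: 'x \<Rightarrow> real pmf) (Ws :: real set).
      finite Ws \<and>
      (\<forall>x. set_pmf (Wd x) \<subseteq> Ws) \<and>
      (\<forall>x. \<forall>w\<in>Ws. probYstar (K2 x w) = probYstar (bind_pmf (Wd x) (K2 x))) \<and>
      (\<forall>x y. \<forall>w1\<in>Ws. \<forall>w2\<in>Ws. w1 > w2 \<longrightarrow> misrep (K2 x w1) y \<le> misrep (K2 x w2) y) \<and>
      (\<forall>x. \<forall>w\<in>Ws. misrep (K2 x w) False + misrep (K2 x w) True \<le> 1
                    \<and> 0 < probY (K2 x w) \<and> probY (K2 x w) < 1) \<and>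
      (\<forall>x. \<forall>w\<in>Ws. misrep (K2 x w) False \<le> misrep (K2 x w) True)
      \<longrightarrow>
      (\<forall>x.
         probYstar (bind_pmf (Wd x) (K2 x)) \<in>
           {(SUP w\<in>Ws.
               (probY (K2 x w) - min (INF w'\<in>{w'\<in>Ws. w' \<le> w}. probY (K2 x w'))
                                     (1 - (SUP w'\<in>{w'\<in>Ws. w' \<le> w}. probY (K2 x w'))))
               / (1 - min (INF w'\<in>{w'\<in>Ws. w' \<le> w}. probY (K2 x w'))
                          (1 - (SUP w'\<in>{w'\<in>Ws. w' \<le> w}. probY (K2 x w'))))) ..
            (INF w\<in>Ws. probY (K2 x w) / (SUP w'\<in>{w'\<in>Ws. w' \<le> w}. probY (K2 x w')))}))"
  
proof (intro conjI allI impI)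
  fix K :: "'a \<times> 'z::finite \<Rightarrow> (bool \<times> bool) pmf" and Zd :: "'a \<Rightarrow> 'z pmf" and xt z
  assume H: "(\<forall>xt z y. misrep (K (xt, z)) y = misrep (bind_pmf (Zd xt) (\<lambda>z'. K (xt, z'))) y) \<and>
      (\<forall>xt. misrep (bind_pmf (Zd xt) (\<lambda>z'. K (xt, z'))) True
            + misrep (bind_pmf (Zd xt) (\<lambda>z'. K (xt, z'))) False \<le> 1) \<and>
      (\<forall>xt. (SUP z'. probY (K (xt, z'))) > 0 \<and> (INF z'. probY (K (xt, z'))) < 1) \<and>
      (\<forall>xt. misrep (bind_pmf (Zd xt) (\<lambda>z'. K (xt, z'))) False
            \<le> misrep (bind_pmf (Zd xt) (\<lambda>z'. K (xt, z'))) True)"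
  show "probYstar (K (xt, z)) \<in>
           {(probY (K (xt, z)) - min (INF z'. probY (K (xt, z'))) (1 - (SUP z'. probY (K (xt, z')))))
              / (1 - min (INF z'. probY (K (xt, z'))) (1 - (SUP z'. probY (K (xt, z'))))) ..
            probY (K (xt, z)) / (SUP z'. probY (K (xt, z')))}"
    by (rule part1) (use H in auto)
next
  fix K2 :: "'x \<Rightarrow> real \<Rightarrow> (bool \<times> bool) pmf" and Wd :: "'x \<Rightarrow> real pmf" and Ws :: "real set" and x
  assume H: "finite Ws \<and>
      (\<forall>x. set_pmf (Wd x) \<subseteq> Ws) \<and>
      (\<forall>x. \<forall>w\<in>Ws. probYstar (K2 x w) = probYstar (bind_pmf (Wd x) (K2 x))) \<and>
      (\<forall>x y. \<forall>w1\<in>Ws. \<forall>w2\<in>Ws. w1 > w2 \<longrightarrow> misrep (K2 x w1) y \<le> misrep (K2 x w2) y) \<and>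
      (\<forall>x. \<forall>w\<in>Ws. misrep (K2 x w) False + misrep (K2 x w) True \<le> 1
                    \<and> 0 < probY (K2 x w) \<and> probY (K2 x w) < 1) \<and>
      (\<forall>x. \<forall>w\<in>Ws. misrep (K2 x w) False \<le> misrep (K2 x w) True)"
  have ne: "Ws \<noteq> {}" using H set_pmf_not_empty[of "Wd x"] by blast
  show "probYstar (bind_pmf (Wd x) (K2 x)) \<in>
           {(SUP w\<in>Ws.
               (probY (K2 x w) - min (INF w'\<in>{w'\<in>Ws. w' \<le> w}. probY (K2 x w'))
                                     (1 - (SUP w'\<in>{w'\<in>Ws. w' \<le> w}. probY (K2 x w'))))
               / (1 - min (INF w'\<in>{w'\<in>Ws. w' \<le> w}. probY (K2 x w'))
                          (1 - (SUP w'\<in>{w'\<in>Ws. w' \<le> w}. probY (K2 x w'))))) ..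
            (INF w\<in>Ws. probY (K2 x w) / (SUP w'\<in>{w'\<in>Ws. w' \<le> w}. probY (K2 x w')))}"
    by (rule part2[OF _ ne]) (use H in auto)
qed

end
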